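(* Let $L$ be a PG-lattice and $M$ a faithful multiplication PG-lattice $L$-module. Then for every family $\{a_\alpha\mid\alpha\in\Delta\}\subseteq L$, $$\bigwedge_{\alpha\in\Delta}(a_\alpha I_M)=\Big(\bigwedge_{\alpha\in\Delta}a_\alpha\Big)I_M.$$
   Context: $L$ is a multiplicative lattice (complete lattice with commutative, associative multiplication distributing over arbitrary joins, identity $1$, least $0$), compactly generated, $1$ compact, finite products of compact elements compact. An $L$-module is a complete lattice $M$ (least $O_M$, greatest $I_M$) with product $aB\in M$ satisfying $(\bigvee a_\alpha)A=\bigvee(a_\alpha A)$, $a(\bigvee A_\alpha)=\bigvee(aA_\alpha)$, $(ab)A=a(bA)$, $1A=A$, $0A=O_M$. $(A:B)=\bigvee\{x\in L:xB\leqslant A\}$ for $A,B\in M$; $(a:b)=\bigvee\{x\in L:xb\leqslant a\}$ for $a,b\in L$. $e\in L$ is principal if $a\wedge be=((a:e)\wedge b)e$ and $(ae\vee b):e=(b:e)\vee a$ for all $a,b\in L$; $L$ is a PG-lattice if every element is a join of principal elements. $N\in M$ is principal if $(b\wedge(B:N))N=bN\wedge B$ and $b\vee(B:N)=((bN\vee B):N)$ for all $b\in L,B\in M$; $M$ is a PG-lattice module if every element is a join of principal elements. $M$ is faithful if $(O_M:I_M)=0$; a multiplication module if every $N\in M$ equals $aI_M$ for some $a\in L$. *)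

theory Defs
  imports Main
begin

text \<open>Multiplicative lattices: the carrier is a complete lattice of type 'a,
  multiplication is the function mul; the greatest element top plays the role of 1
  (the multiplicative identity) and bot plays the role of 0.\<close>

definition compact_el :: "'a::complete_lattice \<Rightarrow> bool" where
  "compact_el x \<longleftrightarrow> (\<forall>S. x \<le> Sup S \<longrightarrow> (\<exists>F. finite F \<and> F \<subseteq> S \<and> x \<le> Sup F))"

definition mult_lattice :: "('a::complete_lattice \<Rightarrow> 'a \<Rightarrow> 'a) \<Rightarrow> bool" where
  "mult_lattice mul \<longleftrightarrow>
     (\<forall>a b. mul a b = mul b a) \<and>
     (\<forall>a b c. mul (mul a b) c = mul a (mul b c)) \<and>
     (\<forall>a S. mul a (Sup S) = Sup (mul a ` S)) \<and>
     (\<forall>a. mul top a = a) \<and>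
     (\<forall>x::'a. x = Sup {c. compact_el c \<and> c \<le> x}) \<and>
     compact_el (top::'a) \<and>
     (\<forall>a b. compact_el a \<longrightarrow> compact_el b \<longrightarrow> compact_el (mul a b))"

definition lattice_module ::
  "('a::complete_lattice \<Rightarrow> 'a \<Rightarrow> 'a) \<Rightarrow> ('a \<Rightarrow> 'm::complete_lattice \<Rightarrow> 'm) \<Rightarrow> bool" where
  "lattice_module mul act \<longleftrightarrow>
     mult_lattice mul \<and>
     (\<forall>S A. act (Sup S) A = Sup ((\<lambda>a. act a A) ` S)) \<and>
     (\<forall>a T. act a (Sup T) = Sup (act a ` T)) \<and>
     (\<forall>a b A. act (mul a b) A = act a (act b A)) \<and>
     (\<forall>A. act top A = A) \<and>
     (\<forall>A. act bot A = bot)"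

definition lres :: "('a::complete_lattice \<Rightarrow> 'a \<Rightarrow> 'a) \<Rightarrow> 'a \<Rightarrow> 'a \<Rightarrow> 'a" where
  "lres mul a b = Sup {x. mul x b \<le> a}"

definition mres :: "('a \<Rightarrow> 'm::complete_lattice \<Rightarrow> 'm) \<Rightarrow> 'm \<Rightarrow> 'm \<Rightarrow> 'a::complete_lattice" where
  "mres act A B = Sup {x. act x B \<le> A}"

definition principal_el :: "('a::complete_lattice \<Rightarrow> 'a \<Rightarrow> 'a) \<Rightarrow> 'a \<Rightarrow> bool" where
  "principal_el mul e \<longleftrightarrow>
     (\<forall>a b. inf a (mul b e) = mul (inf (lres mul a e) b) e) \<and>
     (\<forall>a b. lres mul (sup (mul a e) b) e = sup (lres mul b e) a)"

definition PG_lattice :: "('a::complete_lattice \<Rightarrow> 'a \<Rightarrow> 'a) \<Rightarrow> bool" where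
  "PG_lattice mul \<longleftrightarrow> mult_lattice mul \<and>
     (\<forall>x. \<exists>S. (\<forall>e\<in>S. principal_el mul e) \<and> x = Sup S)"

definition principal_mod_el :: "('a::complete_lattice \<Rightarrow> 'm::complete_lattice \<Rightarrow> 'm) \<Rightarrow> 'm \<Rightarrow> bool" where
  "principal_mod_el act N \<longleftrightarrow>
     (\<forall>b B. act (inf b (mres act B N)) N = inf (act b N) B) \<and>
     (\<forall>b B. sup b (mres act B N) = mres act (sup (act b N) B) N)"

definition PG_module ::
  "('a::complete_lattice \<Rightarrow> 'a \<Rightarrow> 'a) \<Rightarrow> ('a \<Rightarrow> 'm::complete_lattice \<Rightarrow> 'm) \<Rightarrow> bool" where
  "PG_module mul act \<longleftrightarrow> lattice_module mul act \<and>
     (\<forall>N. \<exists>S. (\<forall>P\<in>S. principal_mod_el act P) \<and> N = Sup S)"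

definition faithful_module :: "('a::complete_lattice \<Rightarrow> 'm::complete_lattice \<Rightarrow> 'm) \<Rightarrow> bool" where
  "faithful_module act \<longleftrightarrow> mres act (bot::'m) (top::'m) = (bot::'a)"

definition multiplication_module :: "('a::complete_lattice \<Rightarrow> 'm::complete_lattice \<Rightarrow> 'm) \<Rightarrow> bool" where
  "multiplication_module act \<longleftrightarrow> (\<forall>N::'m. \<exists>a::'a. N = act a top)"

end

theory Submission
  imports Defs
begin

lemma lm_parts:
  assumes "lattice_module mul act"
  shows "\<And>a b. mul a b = mul b a"
    and "\<And>a S. mul a (Sup S) = Sup (mul a ` S)"
    and "\<And>a. mul top a = a"
    and "\<And>S A. act (Sup S) A = Sup ((\<lambda>a. act a A) ` S)"
    and "\<And>a T. act a (Sup T) = Sup (act a ` T)"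
    and "\<And>a b A. act (mul a b) A = act a (act b A)"
    and "\<And>A. act top A = A"
    and "\<And>A. act bot A = bot"
  using assms unfolding lattice_module_def mult_lattice_def by auto

lemma act_mono1:
  assumes "lattice_module mul act" "x \<le> y" shows "act x A \<le> act y A"
proof -
  have "act y A = act (Sup {x,y}) A" using assms(2) by (simp add: sup_absorb2)
  also have "\<dots> = sup (act x A) (act y A)" using lm_parts(4)[OF assms(1), of "{x,y}" A] by simp
  finally show ?thesis by (simp add: le_iff_sup)
qed

lemma act_mono2:
  assumes "lattice_module mul act" "X \<le> Y" shows "act a X \<le> act a Y"
proof -
  have "act a Y = act a (Sup {X,Y})" using assms(2) by (simp add: sup_absorb2)
  also have "\<dots> = sup (act a X) (act a Y)" using lm_parts(5)[OF assms(1), of a "{X,Y}"] by simp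
  finally show ?thesis by (simp add: le_iff_sup)
qed

lemma mul_sup:
  assumes "lattice_module mul act" shows "mul c (sup x y) = sup (mul c x) (mul c y)"
proof -
  have "mul c (sup x y) = mul c (Sup {x,y})" by simp
  also have "\<dots> = sup (mul c x) (mul c y)" using lm_parts(2)[OF assms, of c "{x,y}"] by simp
  finally show ?thesis .
qed

lemma mul_mono2:
  assumes "lattice_module mul act" "x \<le> y" shows "mul c x \<le> mul c y"
  using mul_sup[OF assms(1), of c x y] assms(2) by (simp add: le_iff_sup sup_absorb2)

lemma mul_le:
  assumes "lattice_module mul act" shows "mul c x \<le> x"
proof -
  have "mul x c \<le> mul x top" by (rule mul_mono2[OF assms]) simp
  then show ?thesis by (simp only: lm_parts(1)[OF assms, of x] lm_parts(3)[OF assms])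
qed

lemma mres_le:
  assumes "lattice_module mul act" shows "act (mres act B N) N \<le> B"
  unfolding mres_def using lm_parts(4)[OF assms] by (simp add: Sup_le_iff)

lemma le_mres:
  assumes "act x N \<le> B" shows "x \<le> mres act B N"
  unfolding mres_def using assms by (simp add: Sup_upper)

lemma mres_mono:
  assumes "B \<le> B'" shows "mres act B N \<le> mres act B' N"
  unfolding mres_def using assms by (auto intro!: Sup_mono)

theorem lemma3p3:
  fixes mul :: "'a::complete_lattice \<Rightarrow> 'a \<Rightarrow> 'a"
    and act :: "'a \<Rightarrow> 'm::complete_lattice \<Rightarrow> 'm"
    and a :: "'i \<Rightarrow> 'a" and \<Delta> :: "'i set"
  assumes "PG_lattice mul"
    and "lattice_module mul act"
    and "faithful_module act"
    and "multiplication_module act"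
    and "PG_module mul act"
  shows "Inf ((\<lambda>\<alpha>. act (a \<alpha>) top) ` \<Delta>) = act (Inf (a ` \<Delta>)) top"
proof -
  note lm = assms(2)
  note P = lm_parts[OF lm]
  define Y where "Y = Inf ((\<lambda>\<alpha>. act (a \<alpha>) top) ` \<Delta>)"
  define A where "A = Inf (a ` \<Delta>)"
  have key: "act (mres act Q top) Y \<le> act A top" if pr: "principal_mod_el act Q" for Q
  proof -
    define c where "c = mres act Q top"
    obtain e where e: "Q = act e top" using assms(4) unfolding multiplication_module_def by blast
    have cQ: "act c top = Q"
    proof (rule antisym)
      show "act c top \<le> Q" unfolding c_def by (rule mres_le[OF lm])
      have "e \<le> c" unfolding c_def using e by (intro le_mres) simp
      then show "Q \<le> act c top" using act_mono1[OF lm, of e c top] e by simp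
    qed
    define z where "z = mres act bot Q"
    have "act (mul c z) top = act z Q" by (simp only: P(1)[of c z] P(6) cQ)
    also have "\<dots> \<le> bot" unfolding z_def by (rule mres_le[OF lm])
    finally have "mul c z \<le> mres act bot top" by (intro le_mres) simp
    then have cz: "mul c z = bot" using assms(3) unfolding faithful_module_def by (simp add: bot_unique)
    define B where "B = inf Q (INF \<alpha>\<in>\<Delta>. act (a \<alpha>) Q)"
    have "act c Y \<le> act (a \<alpha>) Q" if "\<alpha> \<in> \<Delta>" for \<alpha>
    proof -
      have "act c Y \<le> act c (act (a \<alpha>) top)"
        using that by (intro act_mono2[OF lm]) (auto simp: Y_def intro: Inf_lower)
      also have "\<dots> = act (mul c (a \<alpha>)) top" by (simp only: P(6))
      also have "\<dots> = act (mul (a \<alpha>) c) top" by (simp only: P(1)[of c "a \<alpha>"])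
      also have "\<dots> = act (a \<alpha>) Q" by (simp only: P(6) cQ)
      finally show ?thesis .
    qed
    moreover have "act c Y \<le> Q" using act_mono2[OF lm, of Y top c] cQ by simp
    ultimately have cYB: "act c Y \<le> B" unfolding B_def by (auto intro: INF_greatest)
    define r where "r = mres act B Q"
    have "act (inf top r) Q = inf (act top Q) B"
      using pr unfolding principal_mod_el_def r_def by blast
    then have Br: "B = act r Q" using P(7) unfolding B_def by (simp add: inf_absorb2)
    have "mul r c \<le> a \<alpha>" if "\<alpha> \<in> \<Delta>" for \<alpha>
    proof -
      have "B \<le> act (a \<alpha>) Q" unfolding B_def using that by (meson INF_lower inf.coboundedI2)
      then have "r \<le> mres act (act (a \<alpha>) Q) Q" unfolding r_def by (rule mres_mono)
      also have "\<dots> = sup (a \<alpha>) z"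
        using pr unfolding principal_mod_el_def z_def by (metis sup_bot_right)
      finally have "mul c r \<le> mul c (sup (a \<alpha>) z)" by (rule mul_mono2[OF lm])
      also have "\<dots> = sup (mul c (a \<alpha>)) bot" using mul_sup[OF lm] cz by simp
      also have "\<dots> \<le> a \<alpha>" using mul_le[OF lm] by simp
      finally show ?thesis by (simp only: P(1)[of r c])
    qed
    then have "mul r c \<le> A" unfolding A_def by (auto intro: INF_greatest)
    then have "act (mul r c) top \<le> act A top" by (rule act_mono1[OF lm])
    moreover have "act (mul r c) top = B" by (simp only: P(6) cQ Br)
    ultimately show ?thesis using cYB unfolding c_def by simp
  qed
  have le1: "Y \<le> act A top"
  proof -
    obtain y where y: "Y = act y top" using assms(4) unfolding multiplication_module_def by blast
    obtain S where S: "\<forall>Q\<in>S. principal_mod_el act Q" "(top::'m) = Sup S"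
      using assms(5) unfolding PG_module_def by blast
    have "Y = Sup (act y ` S)" unfolding y by (subst S(2)) (rule P(5))
    also have "\<dots> \<le> act A top"
    proof (rule Sup_least)
      fix X assume "X \<in> act y ` S"
      then obtain Q where Q: "Q \<in> S" "X = act y Q" by blast
      obtain e where e: "Q = act e top" using assms(4) unfolding multiplication_module_def by blast
      have eq: "act (mres act Q top) top = Q"
      proof (rule antisym)
        show "act (mres act Q top) top \<le> Q" by (rule mres_le[OF lm])
        have "e \<le> mres act Q top" using e by (intro le_mres) simp
        then show "Q \<le> act (mres act Q top) top" using act_mono1[OF lm, of e "mres act Q top" top] e by simp
      qed
      have "X = act y (act (mres act Q top) top)" using Q(2) eq by simp
      also have "\<dots> = act (mres act Q top) Y"
        by (simp only: y P(6)[symmetric] P(1)[of y "mres act Q top"])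
      also have "\<dots> \<le> act A top" using key S(1) Q(1) by blast
      finally show "X \<le> act A top" .
    qed
    finally show ?thesis .
  qed
  have le2: "act A top \<le> Y"
    unfolding Y_def A_def by (auto intro!: INF_greatest act_mono1[OF lm] INF_lower)
  show ?thesis using le1 le2 unfolding Y_def A_def by (rule antisym)
qed

end
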